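(* Let $Q\in N_\kappa(H)$ have the representation $Q(z)=\Gamma_0^+(A-z)^{-1}\Gamma_0$, where $A$ is a bounded self-adjoint operator in a Pontryagin space $K$, $\Gamma_0:H\to K$ is bounded, and $\Gamma_0^+\Gamma_0$ is boundedly invertible (the representation need not be minimal). Let $P:=\Gamma_0(\Gamma_0^+\Gamma_0)^{-1}\Gamma_0^+$ and let $\tilde A:=(I-P)A(I-P)$, regarded as a bounded self-adjoint operator in the Pontryagin space $(I-P)K$; for $z\in\rho(\tilde A)$ let $(I-P)(\tilde A-z)^{-1}(I-P)$ denote the operator on $K$ equal to $(\tilde A-z)^{-1}$ on $(I-P)K$ and to $0$ on $PK$. Then for every $z\in\rho(A)\cap\rho(\tilde A)$, $Q(z)$ is boundedly invertible and $\hat Q(z):=-Q(z)^{-1}$ is given by $$\hat Q(z)=(\Gamma_0^+\Gamma_0)^{-1}\Gamma_0^+\Big\{A(I-P)(\tilde A-z)^{-1}(I-P)A-(A-z)\Big\}\Gamma_0(\Gamma_0^+\Gamma_0)^{-1}.$$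
   Context: $H$ is a Hilbert space with inner product $(\cdot,\cdot)$; $(K,[\cdot,\cdot])$ is a Pontryagin space (Krein space with finitely many negative squares). For bounded $\Gamma_0:H\to K$, $\Gamma_0^+:K\to H$ is defined by $(h,\Gamma_0^+k)=[\Gamma_0h,k]$. $N_\kappa(H)$ is the class of generalized Nevanlinna functions: $Q$ meromorphic in $\mathbb{C}\setminus\mathbb{R}$ with values in bounded operators on $H$, $Q(\bar z)^*=Q(z)$, and the kernel $\frac{Q(z)-Q(w)^*}{z-\bar w}$ has exactly $\kappa$ negative squares. $P$ is an orthogonal projection in $K$ with $PK=\Gamma_0(H)$, $(I-P)K=\ker\Gamma_0^+$, and $K=(I-P)K[+]PK$. *)

theory Defs
  imports "HOL-Analysis.Analysis"
begin

class complex_vector = real_vector +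
  fixes scaleC :: "complex \<Rightarrow> 'a \<Rightarrow> 'a" (infixr "*\<^sub>C" 75)
  assumes scaleR_scaleC: "scaleR r x = scaleC (complex_of_real r) x"
    and scaleC_add_right: "scaleC a (x + y) = scaleC a x + scaleC a y"
    and scaleC_add_left: "scaleC (a + b) x = scaleC a x + scaleC b x"
    and scaleC_scaleC: "scaleC a (scaleC b x) = scaleC (a * b) x"
    and scaleC_one: "scaleC 1 x = x"

class complex_inner = complex_vector + real_normed_vector +
  fixes cinner :: "'a \<Rightarrow> 'a \<Rightarrow> complex"
  assumes cinner_commute: "cinner x y = cnj (cinner y x)"
    and cinner_add_left: "cinner (x + y) z = cinner x z + cinner y z"
    and cinner_scaleC_left: "cinner (scaleC a x) y = cnj a * cinner x y"
    and cinner_ge_zero: "0 \<le> Re (cinner x x)"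
    and cinner_eq_zero_iff: "cinner x x = 0 \<longleftrightarrow> x = 0"
    and norm_eq_sqrt_cinner: "norm x = sqrt (Re (cinner x x))"

class complex_hilbert = complex_inner + complete_space

definition clinear :: "('a::complex_vector \<Rightarrow> 'b::complex_vector) \<Rightarrow> bool" where
  "clinear f \<longleftrightarrow> (\<forall>x y. f (x + y) = f x + f y) \<and> (\<forall>a x. f (a *\<^sub>C x) = a *\<^sub>C f x)"

definition bounded_clinear ::
  "('a::{complex_vector,real_normed_vector} \<Rightarrow> 'b::{complex_vector,real_normed_vector}) \<Rightarrow> bool" where
  "bounded_clinear f \<longleftrightarrow> clinear f \<and> (\<exists>C. \<forall>x. norm (f x) \<le> norm x * C)"

definition boundedly_invertible ::
  "('a::{complex_vector,real_normed_vector} \<Rightarrow> 'b::{complex_vector,real_normed_vector}) \<Rightarrow> bool" where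
  "boundedly_invertible T \<longleftrightarrow> bij T \<and> bounded_clinear (inv T)"

text \<open>A Pontryagin space is modelled as a complex Hilbert space together with a
  fundamental symmetry J (bounded, J^2 = I, J selfadjoint) whose negative
  eigenspace {x. J x = -x} is finite dimensional; the indefinite inner product
  is [x,y] = (J x, y).\<close>
definition pontryagin_symmetry :: "('k::complex_hilbert \<Rightarrow> 'k) \<Rightarrow> bool" where
  "pontryagin_symmetry J \<longleftrightarrow>
     bounded_clinear J \<and> (\<forall>x. J (J x) = x) \<and> (\<forall>x y. cinner (J x) y = cinner x (J y)) \<and>
     (\<exists>(n::nat) (e::nat \<Rightarrow> 'k). \<forall>x. J x = - x \<longrightarrow> (\<exists>c. x = (\<Sum>i<n. c i *\<^sub>C e i)))"

definition kinner :: "('k::complex_hilbert \<Rightarrow> 'k) \<Rightarrow> 'k \<Rightarrow> 'k \<Rightarrow> complex" where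
  "kinner J x y = cinner (J x) y"

definition resolvent_op :: "'k set \<Rightarrow> ('k::complex_hilbert \<Rightarrow> 'k) \<Rightarrow> complex \<Rightarrow> 'k \<Rightarrow> 'k" where
  "resolvent_op M T z = inv_into M (\<lambda>x. T x - z *\<^sub>C x)"

definition in_resolvent_set :: "'k set \<Rightarrow> ('k::complex_hilbert \<Rightarrow> 'k) \<Rightarrow> complex \<Rightarrow> bool" where
  "in_resolvent_set M T z \<longleftrightarrow>
     bij_betw (\<lambda>x. T x - z *\<^sub>C x) M M \<and>
     (\<exists>C. \<forall>y\<in>M. norm (resolvent_op M T z y) \<le> C * norm y)"

end

theory Submission
  imports Defs
begin


lemma clin_add: "clinear f \<Longrightarrow> f (x + y) = f x + f y"
  by (simp add: clinear_def)
lemma clin_scale: "clinear f \<Longrightarrow> f (a *\<^sub>C x) = a *\<^sub>C f x"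
  by (simp add: clinear_def)
lemma clin_additive: "clinear f \<Longrightarrow> Modules.additive f"
  by (simp add: clinear_def Modules.additive_def)
lemma clin_diff: "clinear f \<Longrightarrow> f (x - y) = f x - f y"
  using clin_additive Modules.additive.diff by blast
lemma clin_minus: "clinear f \<Longrightarrow> f (- x) = - f x"
  using clin_additive Modules.additive.minus by blast
lemma clin_zero: "clinear f \<Longrightarrow> f 0 = 0"
  using clin_additive Modules.additive.zero by blast

context
begin

lemma cinner_zero_left: "cinner (0::'a::complex_inner) y = 0"
  using cinner_add_left[of "0::'a" 0 y] by simp

lemma cinner_add_right: "cinner (x::'a::complex_inner) (y + z) = cinner x y + cinner x z"
proof -
  have "cinner x (y+z) = cnj (cinner (y+z) x)" by (rule cinner_commute)
  also have "\<dots> = cnj (cinner y x) + cnj (cinner z x)" by (simp add: cinner_add_left)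
  also have "\<dots> = cinner x y + cinner x z" by (simp add: cinner_commute[of x y] cinner_commute[of x z])
  finally show ?thesis .
qed

lemma cinner_scaleC_right: "cinner (x::'a::complex_inner) (a *\<^sub>C y) = a * cinner x y"
proof -
  have "cinner x (a *\<^sub>C y) = cnj (cinner (a *\<^sub>C y) x)" by (rule cinner_commute)
  also have "\<dots> = a * cnj (cinner y x)" by (simp add: cinner_scaleC_left)
  also have "\<dots> = a * cinner x y" by (simp add: cinner_commute[of x y])
  finally show ?thesis .
qed

lemma scaleC_minus1: "- (x::'a::complex_vector) = (-1) *\<^sub>C x"
proof -
  have "(-1::real) *\<^sub>R x = complex_of_real (-1) *\<^sub>C x" by (rule scaleR_scaleC)
  then show ?thesis by simp
qed

lemma cinner_minus_left: "cinner (- (x::'a::complex_inner)) y = - cinner x y"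
  by (simp add: scaleC_minus1[of x] cinner_scaleC_left)

lemma cinner_minus_right: "cinner (x::'a::complex_inner) (- y) = - cinner x y"
  by (simp add: scaleC_minus1[of y] cinner_scaleC_right)

lemma cinner_diff_left: "cinner ((x::'a::complex_inner) - y) z = cinner x z - cinner y z"
  unfolding diff_conv_add_uminus by (simp only: cinner_add_left cinner_minus_left)

lemma cinner_diff_right: "cinner (x::'a::complex_inner) (y - z) = cinner x y - cinner x z"
  unfolding diff_conv_add_uminus by (simp only: cinner_add_right cinner_minus_right)

lemma cinner_scaleR_left: "cinner (r *\<^sub>R (x::'a::complex_inner)) y = complex_of_real r * cinner x y"
  by (simp add: scaleR_scaleC cinner_scaleC_left)

lemma cinner_scaleR_right: "cinner (x::'a::complex_inner) (r *\<^sub>R y) = complex_of_real r * cinner x y"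
  by (simp add: scaleR_scaleC cinner_scaleC_right)

lemma norm_sq_cinner: "(norm (x::'a::complex_inner))^2 = Re (cinner x x)"
  by (simp add: norm_eq_sqrt_cinner cinner_ge_zero)

lemma cinner_self_real: "cinner (x::'a::complex_inner) x = complex_of_real (Re (cinner x x))"
proof -
  have c: "cinner x x = cnj (cinner x x)" by (rule cinner_commute)
  have "Im (cinner x x) = 0"
    using arg_cong[OF c, of Im] by simp
  then show ?thesis by (simp add: complex_eq_iff)
qed

lemma cinner_ext: "(\<And>h. cinner h a = cinner h b) \<Longrightarrow> (a::'a::complex_inner) = b"
proof -
  assume H: "\<And>h. cinner h a = cinner h b"
  have "cinner (a - b) (a - b) = 0"
    using H[of "a - b"] by (simp add: cinner_diff_right)
  then have "a - b = 0" by (simp only: cinner_eq_zero_iff)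
  then show "a = b" by simp
qed

lemma norm_scaleC: "norm (a *\<^sub>C (x::'a::complex_inner)) = cmod a * norm x"
proof -
  have "cinner (a *\<^sub>C x) (a *\<^sub>C x) = (cnj a * a) * cinner x x"
    by (simp add: cinner_scaleC_left cinner_scaleC_right)
  also have "cnj a * a = complex_of_real ((cmod a)^2)"
    using complex_norm_square[of a] by (simp only: mult.commute)
  finally have "(norm (a *\<^sub>C x))^2 = (cmod a)^2 * (norm x)^2"
    by (simp add: norm_sq_cinner)
  also have "\<dots> = (cmod a * norm x)^2" by (simp add: power_mult_distrib)
  finally show ?thesis
    by (rule power2_eq_imp_eq) (simp_all)
qed

lemma cs_re: "Re (cinner (a::'a::complex_inner) b) \<le> norm a * norm b"
proof (cases "a = 0 \<or> b = 0")
  case True then show ?thesis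
    by (auto simp: cinner_zero_left cinner_commute[of a 0])
next
  case False
  then have na: "norm a > 0" and nb: "norm b > 0" by auto
  define t where "t = norm a / norm b"
  have sym: "Re (cinner b a) = Re (cinner a b)"
    by (subst cinner_commute) simp
  have "0 \<le> Re (cinner (a - t *\<^sub>R b) (a - t *\<^sub>R b))" by (rule cinner_ge_zero)
  also have "\<dots> = Re (cinner a a) - 2 * t * Re (cinner a b) + t^2 * Re (cinner b b)"
    by (simp add: cinner_diff_left cinner_diff_right cinner_scaleR_left cinner_scaleR_right sym
        power2_eq_square algebra_simps)
  also have "\<dots> = 2 * (norm a)^2 - 2 * t * Re (cinner a b)"
    using nb by (simp add: norm_sq_cinner[symmetric] t_def power_divide)
  finally have "t * Re (cinner a b) \<le> (norm a)^2" by simp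
  then have "norm a * Re (cinner a b) \<le> norm a * (norm a * norm b)"
    using nb by (simp add: t_def field_simps power2_eq_square)
  then show ?thesis using na by (rule mult_left_le_imp_le)
qed

end

definition bnd :: "('a::real_normed_vector \<Rightarrow> 'b::real_normed_vector) \<Rightarrow> bool" where
  "bnd f \<longleftrightarrow> (\<exists>C. \<forall>x. norm (f x) \<le> norm x * C)"

lemma bnd_pos: "bnd f \<Longrightarrow> \<exists>C>0. \<forall>x. norm (f x) \<le> norm x * C"
proof -
  assume "bnd f"
  then obtain C where C: "\<forall>x. norm (f x) \<le> norm x * C" by (auto simp: bnd_def)
  have "\<forall>x. norm (f x) \<le> norm x * (max C 1)"
    by (metis C order_trans max.cobounded1 mult_left_mono norm_ge_zero)
  then show ?thesis by (intro exI[of _ "max C 1"]) auto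
qed

lemma bnd_comp: "bnd f \<Longrightarrow> bnd g \<Longrightarrow> bnd (\<lambda>x. f (g x))"
proof -
  assume "bnd f" "bnd g"
  then obtain C D where C: "C > 0" "\<forall>x. norm (f x) \<le> norm x * C"
    and D: "D > 0" "\<forall>x. norm (g x) \<le> norm x * D" using bnd_pos by metis
  have "norm (f (g x)) \<le> norm x * (D * C)" for x
  proof -
    have "norm (f (g x)) \<le> norm (g x) * C" using C by auto
    also have "\<dots> \<le> norm x * D * C" using D C by (simp add: mult_right_mono)
    finally show ?thesis by (simp add: mult.assoc)
  qed
  then show ?thesis unfolding bnd_def by blast
qed

lemma bnd_diff: "bnd f \<Longrightarrow> bnd g \<Longrightarrow> bnd (\<lambda>x. f x - g x)"
proof -
  assume "bnd f" "bnd g"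
  then obtain C D where C: "\<forall>x. norm (f x) \<le> norm x * C"
    and D: "\<forall>x. norm (g x) \<le> norm x * D" by (auto simp: bnd_def)
  have "norm (f x - g x) \<le> norm x * (C + D)" for x
    using norm_triangle_ineq4[of "f x" "g x"] C D by (smt (verit) distrib_left)
  then show ?thesis unfolding bnd_def by blast
qed

lemma bnd_minus: "bnd f \<Longrightarrow> bnd (\<lambda>x. - f x)"
  by (simp add: bnd_def)

lemma bnd_id: "bnd (\<lambda>x. x)"
  unfolding bnd_def by (intro exI[of _ 1]) simp

lemma bnd_scaleC: "bnd f \<Longrightarrow> bnd (\<lambda>x. c *\<^sub>C (f x :: 'b::complex_inner))"
proof -
  assume "bnd f"
  then obtain C where C: "C > 0" "\<forall>x. norm (f x) \<le> norm x * C" using bnd_pos by metis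
  have "norm (c *\<^sub>C f x) \<le> norm x * (cmod c * C)" for x
    using C by (simp add: norm_scaleC) (metis mult.left_commute mult_left_mono norm_ge_zero)
  then show ?thesis unfolding bnd_def by blast
qed

lemma bnd_on: "(\<And>x. g x \<in> M) \<Longrightarrow> (\<exists>C. \<forall>y\<in>M. norm (r y) \<le> C * norm y) \<Longrightarrow> bnd g
   \<Longrightarrow> bnd (\<lambda>x. r (g x))"
proof -
  assume gM: "\<And>x. g x \<in> M" and "\<exists>C. \<forall>y\<in>M. norm (r y) \<le> C * norm y" and "bnd g"
  then obtain C where C: "\<forall>y\<in>M. norm (r y) \<le> C * norm y" by blast
  have "norm (if y \<in> M then r y else 0) \<le> norm y * max C 0" for y
  proof (cases "y \<in> M")
    case True
    then have "norm (r y) \<le> C * norm y" using C by blast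
    also have "\<dots> \<le> max C 0 * norm y" by (simp add: mult_right_mono)
    finally show ?thesis using True by (simp add: mult.commute)
  qed simp
  then have "bnd (\<lambda>y. if y \<in> M then r y else 0)"
    unfolding bnd_def by blast
  from bnd_comp[OF this \<open>bnd g\<close>] have "bnd (\<lambda>x. if g x \<in> M then r (g x) else 0)" .
  moreover have "(\<lambda>x. if g x \<in> M then r (g x) else 0) = (\<lambda>x. r (g x))"
    using gM by (intro ext) auto
  ultimately show ?thesis by simp
qed

lemma bcl_bnd: "bounded_clinear f \<Longrightarrow> bnd f"
  by (simp add: bounded_clinear_def bnd_def)


lemma clin_comp: "clinear f \<Longrightarrow> clinear g \<Longrightarrow> clinear (\<lambda>x. f (g x))"
  by (simp add: clinear_def)

lemma scaleC_additive: "Modules.additive (\<lambda>x. c *\<^sub>C (x::'a::complex_vector))"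
  by (simp add: Modules.additive_def scaleC_add_right)
lemma scaleC_diff_right: "c *\<^sub>C ((x::'a::complex_vector) - y) = c *\<^sub>C x - c *\<^sub>C y"
  using Modules.additive.diff[OF scaleC_additive] by blast
lemma scaleC_minus_right: "c *\<^sub>C (- (x::'a::complex_vector)) = - (c *\<^sub>C x)"
  using Modules.additive.minus[OF scaleC_additive] by blast
lemma scaleC_zero_right: "c *\<^sub>C (0::'a::complex_vector) = 0"
  using Modules.additive.zero[OF scaleC_additive] by blast
lemma scaleC_comm: "a *\<^sub>C (b *\<^sub>C (x::'a::complex_vector)) = b *\<^sub>C (a *\<^sub>C x)"
  by (simp add: scaleC_scaleC mult.commute)

theorem theorem2:
  fixes \<Gamma>0 :: "'h::complex_hilbert \<Rightarrow> 'k::complex_hilbert"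
    and \<Gamma>p :: "'k \<Rightarrow> 'h"
    and J A :: "'k \<Rightarrow> 'k"
    and z :: complex
  assumes J: "pontryagin_symmetry J"
    and A_bdd: "bounded_clinear A"
    and A_sa: "\<forall>x y. kinner J (A x) y = kinner J x (A y)"
    and \<Gamma>0_bdd: "bounded_clinear \<Gamma>0"
    and \<Gamma>p_adj: "\<forall>h k. cinner h (\<Gamma>p k) = kinner J (\<Gamma>0 h) k"
    and G_inv: "boundedly_invertible (\<Gamma>p \<circ> \<Gamma>0)"
  defines "Q \<equiv> \<lambda>w h. \<Gamma>p (resolvent_op UNIV A w (\<Gamma>0 h))"
    and "Ginv \<equiv> inv (\<Gamma>p \<circ> \<Gamma>0)"
  defines "P \<equiv> \<lambda>x. \<Gamma>0 (Ginv (\<Gamma>p x))"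
  defines "At \<equiv> \<lambda>x. A (x - P x) - P (A (x - P x))"
    and "M \<equiv> range (\<lambda>x. x - P x)"
  assumes z_A: "in_resolvent_set UNIV A z"
    and z_At: "in_resolvent_set M At z"
  shows "boundedly_invertible (Q z) \<and>
         (\<forall>h. - inv (Q z) h =
            Ginv (\<Gamma>p (A (resolvent_op M At z (A (\<Gamma>0 (Ginv h)) - P (A (\<Gamma>0 (Ginv h)))))
                    - (A (\<Gamma>0 (Ginv h)) - z *\<^sub>C \<Gamma>0 (Ginv h)))))"
proof -
  have Jb: "bounded_clinear J" using J by (simp add: pontryagin_symmetry_def)
  have Jl: "clinear J" using Jb by (simp add: bounded_clinear_def)
  have Al: "clinear A" using A_bdd by (simp add: bounded_clinear_def)
  have G0l: "clinear \<Gamma>0" using \<Gamma>0_bdd by (simp add: bounded_clinear_def)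
  have Gib: "bounded_clinear Ginv" using G_inv by (simp add: boundedly_invertible_def Ginv_def)
  have Gil: "clinear Ginv" using Gib by (simp add: bounded_clinear_def)
  have Gbij: "bij (\<Gamma>p \<circ> \<Gamma>0)" using G_inv by (simp add: boundedly_invertible_def)
  have Gp_add: "\<Gamma>p (a + b) = \<Gamma>p a + \<Gamma>p b" for a b
    by (rule cinner_ext) (simp add: \<Gamma>p_adj kinner_def cinner_add_right)
  have Gp_scale: "\<Gamma>p (c *\<^sub>C a) = c *\<^sub>C \<Gamma>p a" for c a
    by (rule cinner_ext) (simp add: \<Gamma>p_adj kinner_def cinner_scaleC_right)
  have Gpl: "clinear \<Gamma>p" by (simp add: clinear_def Gp_add Gp_scale)
  have GG1: "\<Gamma>p (\<Gamma>0 (Ginv h)) = h" for h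
  proof -
    have "(\<Gamma>p \<circ> \<Gamma>0) (inv (\<Gamma>p \<circ> \<Gamma>0) h) = h"
      by (rule surj_f_inv_f[OF bij_is_surj[OF Gbij]])
    then show ?thesis by (simp add: Ginv_def)
  qed
  have GG2: "Ginv (\<Gamma>p (\<Gamma>0 h)) = h" for h
  proof -
    have "inv (\<Gamma>p \<circ> \<Gamma>0) ((\<Gamma>p \<circ> \<Gamma>0) h) = h"
      by (rule inv_f_f[OF bij_is_inj[OF Gbij]])
    then show ?thesis by (simp add: Ginv_def)
  qed
  have Pl: "clinear P" unfolding P_def by (rule clin_comp[OF G0l clin_comp[OF Gil Gpl]])
  have PP: "P (P x) = P x" for x by (simp add: P_def GG1)
  have GpP: "\<Gamma>p (P x) = \<Gamma>p x" for x by (simp add: P_def GG1)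
  have PG0: "P (\<Gamma>0 h) = \<Gamma>0 h" for h by (simp add: P_def GG2)
  have PN: "P (x - P x) = 0" for x by (simp add: clin_diff[OF Pl] PP)
  have GpN: "\<Gamma>p (x - P x) = 0" for x by (simp add: clin_diff[OF Gpl] GpP)
  have Mmem: "u \<in> M \<longleftrightarrow> P u = 0" for u
  proof
    assume "u \<in> M" then obtain x where "u = x - P x" by (auto simp: M_def)
    then show "P u = 0" using PN by simp
  next
    assume "P u = 0" then have "u = u - P u" by simp
    then show "u \<in> M" unfolding M_def by blast
  qed
  have NM: "x - P x \<in> M" for x unfolding M_def by blast
  have AtM: "P u = 0 \<Longrightarrow> At u = A u - P (A u)" for u by (simp add: At_def)
  define fA where "fA = (\<lambda>x. A x - z *\<^sub>C x)"
  define R where "R = resolvent_op UNIV A z"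
  have fAbij: "bij_betw fA UNIV UNIV" using z_A by (simp add: in_resolvent_set_def fA_def)
  have fR: "fA (R v) = v" for v
    using bij_betw_inv_into_right[OF fAbij] by (simp add: R_def resolvent_op_def fA_def)
  have Rf: "R (fA x) = x" for x
    using bij_betw_inv_into_left[OF fAbij] by (simp add: R_def resolvent_op_def fA_def)
  have fA_add: "fA (a + b) = fA a + fA b" for a b
    by (simp add: fA_def clin_add[OF Al] scaleC_add_right algebra_simps)
  have fA_scale: "fA (c *\<^sub>C a) = c *\<^sub>C fA a" for c a
    by (simp add: fA_def clin_scale[OF Al] scaleC_diff_right scaleC_comm)
  have fA_minus: "fA (- a) = - fA a" for a
    by (simp add: fA_def clin_minus[OF Al] scaleC_minus_right)
  have R_add: "R (a + b) = R a + R b" for a b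
  proof -
    have "R (a + b) = R (fA (R a) + fA (R b))" by (simp add: fR)
    also have "\<dots> = R a + R b" by (simp add: fA_add[symmetric] Rf)
    finally show ?thesis .
  qed
  have R_scale: "R (c *\<^sub>C a) = c *\<^sub>C R a" for c a
  proof -
    have "R (c *\<^sub>C a) = R (c *\<^sub>C fA (R a))" by (simp add: fR)
    also have "\<dots> = c *\<^sub>C R a" by (simp add: fA_scale[symmetric] Rf)
    finally show ?thesis .
  qed
  have R_minus: "R (- a) = - R a" for a
  proof -
    have "R (- a) = R (- fA (R a))" by (simp add: fR)
    also have "\<dots> = - R a" by (simp add: fA_minus[symmetric] Rf)
    finally show ?thesis .
  qed
  have Qz: "Q z h = \<Gamma>p (R (\<Gamma>0 h))" for h by (simp add: Q_def R_def)
  define fAt where "fAt = (\<lambda>x. At x - z *\<^sub>C x)"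
  define Rt where "Rt = resolvent_op M At z"
  have fAtbij: "bij_betw fAt M M" using z_At by (simp add: in_resolvent_set_def fAt_def)
  have Rt_in: "v \<in> M \<Longrightarrow> Rt v \<in> M" for v
    using bij_betwE[OF bij_betw_inv_into[OF fAtbij]] by (simp add: Rt_def resolvent_op_def fAt_def)
  have fRt: "v \<in> M \<Longrightarrow> fAt (Rt v) = v" for v
    using bij_betw_inv_into_right[OF fAtbij] by (simp add: Rt_def resolvent_op_def fAt_def)
  have Rtf: "u \<in> M \<Longrightarrow> Rt (fAt u) = u" for u
    using bij_betw_inv_into_left[OF fAtbij] by (simp add: Rt_def resolvent_op_def fAt_def)
  define F where "F = (\<lambda>h. Ginv (\<Gamma>p (A (Rt (A (\<Gamma>0 (Ginv h)) - P (A (\<Gamma>0 (Ginv h)))))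
                    - (A (\<Gamma>0 (Ginv h)) - z *\<^sub>C \<Gamma>0 (Ginv h)))))"
  define T where "T = (\<lambda>h. - F h)"
  have QT: "Q z (T h) = h" for h
  proof -
    define y where "y = \<Gamma>0 (Ginv h)"
    define v0 where "v0 = A y - P (A y)"
    define u where "u = Rt v0"
    define w where "w = A u - (A y - z *\<^sub>C y)"
    have v0M: "v0 \<in> M" unfolding v0_def using NM .
    have uM: "u \<in> M" unfolding u_def using Rt_in[OF v0M] .
    have Pu: "P u = 0" using uM Mmem by blast
    have "fAt u = v0" unfolding u_def using fRt[OF v0M] .
    then have eq1: "A u - P (A u) - z *\<^sub>C u = A y - P (A y)"
      by (simp add: fAt_def AtM[OF Pu] v0_def)
    have Py: "P y = y" by (simp add: y_def PG0)
    have Th: "T h = - Ginv (\<Gamma>p w)" by (simp add: T_def F_def w_def u_def v0_def y_def)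
    have G0T: "\<Gamma>0 (T h) = - P w" by (simp add: Th clin_minus[OF G0l] P_def)
    have Pw: "P w = P (A u) - P (A y) + z *\<^sub>C y"
      by (simp add: w_def clin_diff[OF Pl] clin_scale[OF Pl] Py)
    have "fA (u - y) = (A u - z *\<^sub>C u) - (A y - z *\<^sub>C y)"
      by (simp add: fA_def clin_diff[OF Al] scaleC_diff_right)
    also have "\<dots> = P w" using eq1 unfolding Pw by (simp add: algebra_simps)
    finally have fAuy: "fA (u - y) = P w" .
    have "Q z (T h) = \<Gamma>p (R (- P w))" by (simp add: Qz G0T)
    also have "\<dots> = \<Gamma>p (- (u - y))" by (simp add: R_minus fAuy[symmetric] Rf)
    also have "\<dots> = \<Gamma>p y - \<Gamma>p u" by (simp add: clin_minus[OF Gpl] clin_diff[OF Gpl])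
    also have "\<Gamma>p u = 0" using GpN[of u] Pu by simp
    also have "\<Gamma>p y = h" by (simp add: y_def GG1)
    finally show ?thesis by simp
  qed
  have TQ: "T (Q z h) = h" for h
  proof -
    define x where "x = R (\<Gamma>0 h)"
    have fx: "A x - z *\<^sub>C x = \<Gamma>0 h" using fR[of "\<Gamma>0 h"] by (simp add: x_def fA_def)
    have Qh: "Q z h = \<Gamma>p x" by (simp add: Qz x_def)
    have yP: "\<Gamma>0 (Ginv (Q z h)) = P x" by (simp add: Qh P_def)
    have E: "A x - P (A x) = z *\<^sub>C (x - P x)"
    proof -
      have "(A x - z *\<^sub>C x) - P (A x - z *\<^sub>C x) = 0" using fx PG0 by simp
      then show ?thesis
        by (simp add: clin_diff[OF Pl] clin_scale[OF Pl] scaleC_diff_right algebra_simps)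
    qed
    define u where "u = - (x - P x)"
    have Pu: "P u = 0" unfolding u_def by (simp only: clin_minus[OF Pl] PN) simp
    have uM: "u \<in> M" using Pu Mmem by blast
    have "fAt u = A u - P (A u) - z *\<^sub>C u" by (simp add: fAt_def AtM[OF Pu])
    also have "\<dots> = (A (P x) - P (A (P x))) - (A x - P (A x)) + z *\<^sub>C (x - P x)"
      by (simp add: u_def clin_minus[OF Al] clin_minus[OF Pl] clin_diff[OF Al] clin_diff[OF Pl]
          scaleC_minus_right scaleC_diff_right algebra_simps)
    also have "\<dots> = A (P x) - P (A (P x))" by (simp add: E)
    finally have "fAt u = A (P x) - P (A (P x))" .
    then have Rtu: "Rt (A (P x) - P (A (P x))) = u" using Rtf[OF uM] by simp
    have "A u - (A (P x) - z *\<^sub>C P x) = - (A x - z *\<^sub>C x) - z *\<^sub>C (x - P x)"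
      by (simp add: u_def clin_minus[OF Al] clin_diff[OF Al] scaleC_diff_right algebra_simps)
    also have "\<dots> = - \<Gamma>0 h - z *\<^sub>C (x - P x)" by (simp add: fx)
    finally have wq: "A u - (A (P x) - z *\<^sub>C P x) = - \<Gamma>0 h - z *\<^sub>C (x - P x)" .
    have "\<Gamma>p (- \<Gamma>0 h - z *\<^sub>C (x - P x)) = - \<Gamma>p (\<Gamma>0 h)"
      by (simp add: clin_diff[OF Gpl] clin_minus[OF Gpl] clin_scale[OF Gpl] GpN GpP scaleC_zero_right)
    then have "F (Q z h) = Ginv (- \<Gamma>p (\<Gamma>0 h))"
      by (simp add: F_def yP Rtu wq)
    also have "\<dots> = - h" by (simp add: clin_minus[OF Gil] GG2)
    finally show ?thesis by (simp add: T_def)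
  qed
  have c1: "Q z \<circ> T = id" using QT by (simp add: fun_eq_iff)
  have c2: "T \<circ> Q z = id" using TQ by (simp add: fun_eq_iff)
  have bijQ: "bij (Q z)" by (rule o_bij[OF c2 c1])
  have invQ: "inv (Q z) = T" by (rule inv_unique_comp[OF c1 c2])
  have Q_add: "Q z (a + b) = Q z a + Q z b" for a b
    by (simp add: Qz clin_add[OF G0l] R_add clin_add[OF Gpl])
  have Q_scale: "Q z (c *\<^sub>C a) = c *\<^sub>C Q z a" for c a
    by (simp add: Qz clin_scale[OF G0l] R_scale clin_scale[OF Gpl])
  have T_add: "T (a + b) = T a + T b" for a b
  proof -
    have "T (a + b) = T (Q z (T a) + Q z (T b))" by (simp add: QT)
    also have "\<dots> = T a + T b" by (simp add: Q_add[symmetric] TQ)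
    finally show ?thesis .
  qed
  have T_scale: "T (c *\<^sub>C a) = c *\<^sub>C T a" for c a
  proof -
    have "T (c *\<^sub>C a) = T (c *\<^sub>C Q z (T a))" by (simp add: QT)
    also have "\<dots> = c *\<^sub>C T a" by (simp add: Q_scale[symmetric] TQ)
    finally show ?thesis .
  qed
  have Tl: "clinear T" by (simp add: clinear_def T_add T_scale)
  have bJ: "bnd J" by (rule bcl_bnd[OF Jb])
  have bA: "bnd A" by (rule bcl_bnd[OF A_bdd])
  have bG0: "bnd \<Gamma>0" by (rule bcl_bnd[OF \<Gamma>0_bdd])
  have bGi: "bnd Ginv" by (rule bcl_bnd[OF Gib])
  have bGp: "bnd \<Gamma>p"
  proof -
    obtain C where C: "C > 0" "\<forall>x. norm (J (\<Gamma>0 x)) \<le> norm x * C"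
      using bnd_pos[OF bnd_comp[OF bJ bG0]] by blast
    have "norm (\<Gamma>p k) \<le> norm k * C" for k
    proof (cases "norm (\<Gamma>p k) = 0")
      case True then show ?thesis using C by simp
    next
      case False
      then have pos: "norm (\<Gamma>p k) > 0" by simp
      have "norm (\<Gamma>p k) * norm (\<Gamma>p k) = Re (cinner (\<Gamma>p k) (\<Gamma>p k))"
        by (simp add: norm_sq_cinner[symmetric] power2_eq_square)
      also have "\<dots> = Re (cinner (J (\<Gamma>0 (\<Gamma>p k))) k)" by (simp add: \<Gamma>p_adj kinner_def)
      also have "\<dots> \<le> norm (J (\<Gamma>0 (\<Gamma>p k))) * norm k" by (rule cs_re)
      also have "\<dots> \<le> (norm (\<Gamma>p k) * C) * norm k"
        using C by (simp add: mult_right_mono)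
      finally have "norm (\<Gamma>p k) * norm (\<Gamma>p k) \<le> norm (\<Gamma>p k) * (norm k * C)"
        by (simp add: mult_ac)
      then show ?thesis using pos by (rule mult_left_le_imp_le)
    qed
    then show ?thesis unfolding bnd_def by blast
  qed
  have bY: "bnd (\<lambda>h. \<Gamma>0 (Ginv h))" by (rule bnd_comp[OF bG0 bGi])
  have bAy: "bnd (\<lambda>h. A (\<Gamma>0 (Ginv h)))" by (rule bnd_comp[OF bA bY])
  have bP: "bnd P" unfolding P_def by (rule bnd_comp[OF bG0 bnd_comp[OF bGi bGp]])
  have bPAy: "bnd (\<lambda>h. P (A (\<Gamma>0 (Ginv h))))" by (rule bnd_comp[OF bP bAy])
  have bv: "bnd (\<lambda>h. A (\<Gamma>0 (Ginv h)) - P (A (\<Gamma>0 (Ginv h))))" by (rule bnd_diff[OF bAy bPAy])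
  have Rtb: "\<exists>C. \<forall>y\<in>M. norm (Rt y) \<le> C * norm y"
    using z_At by (simp add: in_resolvent_set_def Rt_def)
  have bRt: "bnd (\<lambda>h. Rt (A (\<Gamma>0 (Ginv h)) - P (A (\<Gamma>0 (Ginv h)))))"
    by (rule bnd_on[OF NM Rtb bv])
  have bARt: "bnd (\<lambda>h. A (Rt (A (\<Gamma>0 (Ginv h)) - P (A (\<Gamma>0 (Ginv h))))))"
    by (rule bnd_comp[OF bA bRt])
  have bzy: "bnd (\<lambda>h. z *\<^sub>C \<Gamma>0 (Ginv h))" by (rule bnd_scaleC[OF bY])
  have bw: "bnd (\<lambda>h. A (Rt (A (\<Gamma>0 (Ginv h)) - P (A (\<Gamma>0 (Ginv h)))))
                    - (A (\<Gamma>0 (Ginv h)) - z *\<^sub>C \<Gamma>0 (Ginv h)))"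
    by (rule bnd_diff[OF bARt bnd_diff[OF bAy bzy]])
  have bF: "bnd F" unfolding F_def by (rule bnd_comp[OF bGi bnd_comp[OF bGp bw]])
  have bT: "bnd T" unfolding T_def by (rule bnd_minus[OF bF])
  have "bounded_clinear T" using Tl bT by (simp add: bounded_clinear_def bnd_def)
  then have part1: "boundedly_invertible (Q z)"
    by (simp add: boundedly_invertible_def bijQ invQ)
  have part2: "\<forall>h. - inv (Q z) h = F h" by (simp add: invQ T_def)
  show ?thesis using part1 part2 by (simp add: F_def Rt_def)
qed

end
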